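(* Let $0\le a<b<1$ and $\lambda\ge 0$. Then $m(\lambda,a,b)\le\lambda+m(a,b)$, with equality if and only if $\lambda=0$.
   Context: $\zeta(t)=\frac{2}{1-t^2}$ and $\phi(t)=2\tanh^{-1}t$ on $[0,1)$. For a bounded function $\varrho\ge0$ on $[a,b]$ with $\varrho/\zeta$ non-decreasing, let $h$ be a primitive of $\varrho$, $\psi=e^h$, $\mathtt f(x)=x\zeta(x)^2\psi(x)$, $\mathtt g(x)=x\zeta(x)\psi(x)$, and $m(\varrho/\zeta,a,b):=\frac{\mathtt g(b)-\mathtt g(a)}{\int_a^b\mathtt f\,dt}$ (independent of the choice of primitive). $m(\lambda,a,b)$ denotes this quantity when $\varrho/\zeta\equiv\lambda$, i.e. $\varrho=\lambda\zeta$ (equivalently $\psi=e^{\lambda\phi}$ up to a constant factor), and $m(a,b):=m(0,a,b)=\frac{1+ab}{a+b}$. *)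

theory Defs
  imports "HOL-Analysis.Analysis"
begin

definition zeta :: "real \<Rightarrow> real" where
  "zeta t = 2 / (1 - t^2)"

definition phi :: "real \<Rightarrow> real" where
  "phi t = 2 * artanh t"

text \<open>The case rho = lambda * zeta: a primitive of rho is lambda * phi, so psi = exp (lambda * phi).\<close>
definition psi_lam :: "real \<Rightarrow> real \<Rightarrow> real" where
  "psi_lam lam x = exp (lam * phi x)"

definition f_lam :: "real \<Rightarrow> real \<Rightarrow> real" where
  "f_lam lam x = x * (zeta x)^2 * psi_lam lam x"

definition g_lam :: "real \<Rightarrow> real \<Rightarrow> real" where
  "g_lam lam x = x * zeta x * psi_lam lam x"

definition m_lam :: "real \<Rightarrow> real \<Rightarrow> real \<Rightarrow> real" where
  "m_lam lam a b = (g_lam lam b - g_lam lam a) / integral {a..b} (f_lam lam)"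

definition m0 :: "real \<Rightarrow> real \<Rightarrow> real" where
  "m0 a b = m_lam 0 a b"

end

theory Submission
  imports Defs
begin


lemma psi_deriv:
  assumes "\<bar>x\<bar> < 1"
  shows "(psi_lam lam has_real_derivative lam * zeta x * psi_lam lam x) (at x)"
proof -
  have "((\<lambda>x. exp (lam * (2 * artanh x))) has_real_derivative
        exp (lam * (2 * artanh x)) * (lam * (2 * (1 / (1 - x^2))))) (at x)"
    using assms by (intro derivative_eq_intros) auto
  thus ?thesis unfolding psi_lam_def phi_def zeta_def [abs_def]
    by (simp add: algebra_simps)
qed

lemma zeta_deriv:
  assumes "\<bar>x\<bar> < 1"
  shows "(zeta has_real_derivative x * (zeta x)^2) (at x)"
proof -
  have ne: "1 - x^2 \<noteq> 0" using assms
    by (metis abs_square_less_1 less_irrefl right_minus_eq)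
  have "((\<lambda>x. 2 / (1 - x^2)) has_real_derivative
        - (2 * (0 - 2 * x ^ 1 * 1)) / (1 - x^2)^2) (at x)"
    using ne apply (intro derivative_eq_intros) apply auto
    by (simp add: power2_eq_square)
  thus ?thesis unfolding zeta_def [abs_def] using ne
    by (simp add: field_simps power2_eq_square)
qed

lemma g_deriv:
  assumes "\<bar>x\<bar> < 1"
  shows "(g_lam lam has_real_derivative
     zeta x * psi_lam lam x + x^2 * (zeta x)^2 * psi_lam lam x + lam * f_lam lam x) (at x)"
proof -
  have "((\<lambda>x. x * zeta x * psi_lam lam x) has_real_derivative
     (1 * zeta x + (x * (zeta x)^2) * x) * psi_lam lam x + x * zeta x * (lam * zeta x * psi_lam lam x)) (at x)"
    using DERIV_mult[OF DERIV_mult[OF DERIV_ident zeta_deriv[OF assms]] psi_deriv[OF assms, of lam]]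
    by (simp add: algebra_simps)
  thus ?thesis unfolding g_lam_def [abs_def] f_lam_def
    by (simp add: algebra_simps power2_eq_square)
qed

lemma cont_f: "-1 < a \<Longrightarrow> b < 1 \<Longrightarrow> continuous_on {a..b} (f_lam lam)"
  unfolding f_lam_def [abs_def] psi_lam_def phi_def zeta_def
  apply (intro continuous_intros)
  apply (auto simp: abs_square_less_1 power2_eq_1_iff)
  done

lemma cont_g: "-1 < a \<Longrightarrow> b < 1 \<Longrightarrow> continuous_on {a..b} (g_lam lam)"
  unfolding g_lam_def [abs_def] psi_lam_def phi_def zeta_def
  apply (intro continuous_intros)
  apply (auto simp: abs_square_less_1 power2_eq_1_iff)
  done

lemma artanh_strict_mono:
  fixes x y :: real
  assumes "-1 < x" "x < y" "y < 1"
  shows "artanh x < artanh y"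
proof -
  have "(1 + x) / (1 - x) < (1 + y) / (1 - y)" using assms
    by (simp add: field_simps)
  moreover have "0 < (1 + x) / (1 - x)" using assms by auto
  ultimately show ?thesis unfolding artanh_def by simp
qed

lemma psi_mono:
  assumes "-1 < x" "x \<le> y" "y < 1" "0 \<le> lam"
  shows "psi_lam lam x \<le> psi_lam lam y"
proof (cases "x = y")
  case False
  then have "artanh x < artanh y" using assms artanh_strict_mono by force
  then show ?thesis using assms unfolding psi_lam_def phi_def
    by (simp add: mult_left_mono)
qed simp

lemma psi_smono:
  assumes "-1 < x" "x < y" "y < 1" "0 < lam"
  shows "psi_lam lam x < psi_lam lam y"
proof -
  have "artanh x < artanh y" using assms artanh_strict_mono by force
  then show ?thesis using assms unfolding psi_lam_def phi_def
    by simp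
qed

lemma aux2: "(y::real) \<noteq> 0 \<Longrightarrow> 2/y * (-y/z) = -2/z"
  by (simp add: divide_simps)

lemma aux3: "(y::real) \<noteq> 0 \<Longrightarrow> (2/y)^2 * y / 2 = 2/y"
  by (simp add: power2_eq_square)

lemma key:
  fixes a b lam :: real
  assumes a0: "0 \<le> a" and ab: "a < b" and b1: "b < 1" and l0: "0 \<le> lam"
  defines "m \<equiv> (1 + a*b)/(a+b)"
  defines "I \<equiv> integral {a..b} (f_lam lam)"
  defines "E \<equiv> g_lam lam b - g_lam lam a - (lam + m) * I"
  shows "E \<le> 0" "0 < lam \<Longrightarrow> E < 0" "lam = 0 \<Longrightarrow> E = 0" "0 < I"
proof -
  have apb: "a + b > 0" using a0 ab by linarith
  have "(1 + a*b) - (a+b) = (1-a)*(1-b)" by (simp add: algebra_simps)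
  moreover have "(1-a)*(1-b) > 0" using ab b1 by auto
  ultimately have m1: "m > 1" unfolding m_def using apb by (simp add: field_simps)
  define s where "s = sqrt (m^2 - 1)"
  have m21: "1 \<le> m^2" using m1 by (metis less_imp_le one_le_power)
  have s2: "s^2 = m^2 - 1" using m21 unfolding s_def by simp
  have s0: "s \<ge> 0" using m21 unfolding s_def by simp
  define c where "c = m - s"
  define r where "r = m + s"
  define q where "q x = (1 + x^2)/2 - m*x" for x
  have qf: "q x = (x - c) * (x - r) / 2" for x
    unfolding q_def c_def r_def using s2 by (simp add: field_simps power2_eq_square)
  have r1: "r > 1" unfolding r_def using m1 s0 by simp
  have cr: "c * r = 1" unfolding c_def r_def using s2 by (simp add: algebra_simps power2_eq_square)
  have c0: "c > 0" using cr r1 by (metis less_trans zero_less_mult_pos2 zero_less_one)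
  have qbe: "q b = (a-b)*(1-b^2) / (2*(a+b))"
    unfolding q_def m_def using apb by (simp add: field_simps power2_eq_square)
  have "1 - b^2 > 0" using ab b1 a0 by (simp add: abs_square_less_1)
  then have "(a-b)*(1-b^2) < 0" using ab by (simp add: mult_neg_pos)
  then have qb: "q b < 0" unfolding qbe using apb by (simp add: divide_neg_pos)
  have "c = 1 / r" using cr r1 by (simp add: field_simps)
  then have c1: "c < 1" using r1 by simp
  have cb: "c < b"
  proof (rule ccontr)
    assume "\<not> c < b"
    then have "(b - c) * (b - r) \<ge> 0" using r1 b1 by (simp add: mult_nonpos_nonpos)
    then show False using qb qf[of b] by simp
  qed
  define F where "F x = integral {a..x} (f_lam lam)" for x
  have fc: "continuous_on {a..b} (f_lam lam)" using cont_f a0 b1 by simp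
  have Fd: "(F has_real_derivative f_lam lam x) (at x)" if "a < x" "x < b" for x
    using integral_has_real_derivative[OF fc, of x] that at_within_Icc_at[OF that]
    unfolding F_def[abs_def] by simp
  have Fc: "continuous_on {a..b} F"
    unfolding F_def[abs_def] by (rule indefinite_integral_continuous_1[OF integrable_continuous_interval[OF fc]])
  have absx: "\<bar>x\<bar> < 1" if "a < x" "x < b" for x using that a0 b1 by auto
  define K where "K x = x * zeta x - m * zeta x" for x
  have Kd: "(K has_real_derivative (1 * zeta x + (x * (zeta x)^2) * x) - m * (x * (zeta x)^2)) (at x)"
    if "\<bar>x\<bar> < 1" for x
    unfolding K_def[abs_def]
    by (intro DERIV_diff DERIV_mult DERIV_cmult DERIV_ident zeta_deriv that)
  have Kval: "K x = -2/(a+b)" if "0 \<le> x" "x < 1" "x = a \<or> x = b" for x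
  proof -
    have ne: "1 - x^2 \<noteq> 0" using that by (simp add: power2_eq_1_iff)
    have ne2: "1 - x \<noteq> 0" "1 + x \<noteq> 0" using that by auto
    have xm: "x - m = (x^2 - 1)/(a+b)" unfolding m_def using that apb
      by (auto simp: field_simps power2_eq_square)
    have "K x = 2/(1-x^2) * (x - m)" unfolding K_def zeta_def by (simp add: algebra_simps diff_divide_distrib)
    also have "\<dots> = 2/(1-x^2) * ((x^2 - 1)/(a+b))" using xm by simp
    also have "\<dots> = 2/(1-x^2) * (-(1-x^2)/(a+b))" by simp
    also have "\<dots> = -2/(a+b)"
      using aux2[OF ne] by simp

    finally show ?thesis .
  qed
  define pc where "pc = psi_lam lam c"
  define D where "D x = g_lam lam x - (lam + m) * F x - pc * K x" for x
  define z where "z x = (zeta x)^2 * q x" for x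
  have zq: "zeta x + x^2 * (zeta x)^2 - m * (x * (zeta x)^2) = z x" if "\<bar>x\<bar> < 1" for x
  proof -
    have ne: "1 - x^2 \<noteq> 0" using that by (auto simp: power2_eq_1_iff)
    have zz: "(zeta x)^2 * (1 - x^2) / 2 = zeta x" unfolding zeta_def using aux3[OF ne] .
    have gen: "Z^2*((1+x^2)/2 - m*x) = (Z^2*(1-x^2)/2) + x^2*Z^2 - m*(x*Z^2)" for Z :: real
      by (simp add: field_simps)
    show ?thesis unfolding z_def q_def using gen[of "zeta x"] zz by simp
  qed
  have Dd: "(D has_real_derivative (psi_lam lam x - pc) * z x) (at x)" if "a < x" "x < b" for x
  proof -
    have "(D has_real_derivative
       (zeta x * psi_lam lam x + x^2 * (zeta x)^2 * psi_lam lam x + lam * f_lam lam x)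
       - (lam + m) * f_lam lam x - pc * ((1 * zeta x + (x * (zeta x)^2) * x) - m * (x * (zeta x)^2))) (at x)"
      unfolding D_def[abs_def]
      by (intro DERIV_diff DERIV_cmult g_deriv Kd Fd absx that)
    moreover have "(zeta x * psi_lam lam x + x^2 * (zeta x)^2 * psi_lam lam x + lam * f_lam lam x)
       - (lam + m) * f_lam lam x - pc * ((1 * zeta x + (x * (zeta x)^2) * x) - m * (x * (zeta x)^2))
       = (psi_lam lam x - pc) * (zeta x + x^2 * (zeta x)^2 - m * (x * (zeta x)^2))"
      unfolding f_lam_def by (simp add: algebra_simps power2_eq_square)
    ultimately show ?thesis using zq[OF absx[OF that]] by simp
  qed
  have Dc: "continuous_on {a..b} D"
    unfolding D_def[abs_def] K_def[abs_def]
    apply (intro continuous_intros cont_g Fc)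
    using a0 b1 apply auto
    unfolding zeta_def[abs_def] by (intro continuous_intros, auto simp: power2_eq_1_iff)+
  have Dnp: "(psi_lam lam x - pc) * z x \<le> 0" if "a < x" "x < b" for x
  proof -
    have z0: "(zeta x)^2 \<ge> 0" by simp
    show ?thesis
    proof (cases "c \<le> x")
      case True
      have "psi_lam lam x \<ge> pc" unfolding pc_def using psi_mono[of c x lam] True c0 that b1 l0 by simp
      moreover have "q x \<le> 0" unfolding qf using True that b1 r1
        by (simp add: mult_nonneg_nonpos)
      ultimately show ?thesis unfolding z_def using z0 by (simp add: mult_nonneg_nonpos mult_le_0_iff)
    next
      case False
      have "psi_lam lam x \<le> pc" unfolding pc_def using psi_mono[of x c lam] False c1 that a0 l0
        by simp
      moreover have "q x \<ge> 0" unfolding qf using False that b1 r1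
        by (simp add: mult_nonpos_nonpos)
      ultimately show ?thesis unfolding z_def using z0 by (simp add: mult_nonpos_nonneg)
    qed
  qed
  have Fa: "F a = 0" unfolding F_def by simp
  have ED: "E = D b - D a"
    unfolding E_def D_def I_def F_def[symmetric] Fa using Kval[of a] Kval[of b] a0 ab b1 by simp
  have Dba: "D b \<le> D a"
    apply (rule DERIV_nonpos_imp_decreasing_open[OF _ _ Dc])
    using ab apply simp
    using Dd Dnp by blast
  show "E \<le> 0" using ED Dba by simp
  show "E < 0" if lp: "0 < lam"
  proof -
    define c' where "c' = max a c"
    have c'b: "c' < b" "a \<le> c'" using cb ab unfolding c'_def by auto
    have neg: "(psi_lam lam x - pc) * z x < 0" if "c' < x" "x < b" for x
    proof -
      have "psi_lam lam x > pc" unfolding pc_def using psi_smono[of c x lam] that c0 b1 lp c'_def by simp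
      moreover have "q x < 0" unfolding qf using that b1 r1 c'_def by (simp add: mult_pos_neg)
      moreover have "zeta x > 0" unfolding zeta_def using that b1 a0 c'_def
        by (simp add: abs_square_less_1)
      ultimately show ?thesis unfolding z_def by (simp add: mult_pos_neg)
    qed
    have "D b < D c'"
    proof (rule DERIV_neg_imp_decreasing_open[OF c'b(1)])
      fix x assume h: "c' < x" "x < b"
      have "a < x" using h c'b by linarith
      then show "\<exists>y. DERIV D x :> y \<and> y < 0" using Dd[OF _ h(2)] neg[OF h] by blast
    next
      show "continuous_on {c'..b} D" using continuous_on_subset[OF Dc, of "{c'..b}"] c'b by simp
    qed
    moreover have "D c' \<le> D a"
    proof (rule DERIV_nonpos_imp_decreasing_open[OF c'b(2)])
      fix x assume h: "a < x" "x < c'"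
      have "x < b" using h c'b by linarith
      then show "\<exists>y. DERIV D x :> y \<and> y \<le> 0" using Dd[OF h(1)] Dnp[OF h(1)] by blast
    next
      show "continuous_on {a..c'} D" using continuous_on_subset[OF Dc, of "{a..c'}"] c'b by simp
    qed
    ultimately show ?thesis using ED by simp
  qed
  show "E = 0" if "lam = 0"
  proof -
    have pp: "psi_lam lam x = pc" for x unfolding pc_def psi_lam_def using that by simp
    have "D a \<le> D b"
    proof (rule DERIV_nonneg_imp_increasing_open[OF _ _ Dc])
      show "a \<le> b" using ab by simp
      fix x assume h: "a < x" "x < b"
      show "\<exists>y. DERIV D x :> y \<and> y \<ge> 0" using Dd[OF h] pp[of x] by auto
    qed
    then show ?thesis using ED Dba by simp
  qed
  have fpos: "f_lam lam x > 0" if "a < x" "x < b" for x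
  proof -
    have "zeta x > 0" unfolding zeta_def using that b1 a0 by (simp add: abs_square_less_1)
    then show ?thesis unfolding f_lam_def psi_lam_def using that a0 by simp
  qed
  have "F a < F b"
    apply (rule DERIV_pos_imp_increasing_open[OF ab _ Fc])
    using Fd fpos by blast
  then show "0 < I" using Fa unfolding I_def F_def by simp
qed


theorem mainTheorem8:
  fixes a b lam :: real
  assumes "0 \<le> a" "a < b" "b < 1" "0 \<le> lam"
  shows "m_lam lam a b \<le> lam + m0 a b \<and> (m_lam lam a b = lam + m0 a b \<longleftrightarrow> lam = 0)"
proof -
  define m where "m = (1 + a*b)/(a+b)"
  define I where "I = integral {a..b} (f_lam lam)"
  define E where "E = g_lam lam b - g_lam lam a - (lam + m) * I"
  define I0 where "I0 = integral {a..b} (f_lam 0)"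
  define E0 where "E0 = g_lam 0 b - g_lam 0 a - (0 + m) * I0"
  note k = key[OF assms, folded m_def I_def, folded E_def]
  have l00: "(0::real) \<le> 0" by simp
  note k0 = key[OF assms(1-3) l00, folded m_def I0_def, folded E0_def]
  have "m0 a b = (E0 + m * I0) / I0" unfolding m0_def m_lam_def E0_def I0_def by simp
  also have "\<dots> = m" using k0(3,4) by simp
  finally have m0e: "m0 a b = m" .
  have "m_lam lam a b = (E + (lam + m) * I) / I" unfolding m_lam_def E_def I_def by simp
  also have "\<dots> = E / I + (lam + m)" using k(4) by (simp add: field_simps)
  finally have me: "m_lam lam a b = E / I + (lam + m)" .
  have "E / I \<le> 0" using k(1) k(4) by (simp add: divide_nonpos_pos)
  moreover have "E / I = 0 \<longleftrightarrow> lam = 0"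
    using k(2,3,4) assms(4) by force
  ultimately show ?thesis unfolding me m0e by auto
qed

end
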